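(* Let $R$ be a domain and $x$ a nonzero nonunit element of $R^+$. (i) If $R$ has characteristic zero, then the ideal $(x^\infty)R^+$ has a free resolution of length (at most) one by countably generated free $R^+$-modules; in particular $\mathrm{pd}_{R^+}((x^\infty)R^+)\le 1$. If moreover $R$ is Noetherian, local and Henselian, then $\mathrm{pd}_{R^+}((x^\infty)R^+)=1$. (ii) If $R$ has prime characteristic $p$, then $(x^\infty)R^+$ has a free resolution of length (at most) one by countably generated free $R^+$-modules; if moreover $R$ is Noetherian, local and Henselian, then $\mathrm{pd}_{R^+}((x^\infty)R^+)=1$.
   Context: $R^+$ denotes the integral closure of the domain $R$ in an algebraic closure of its field of fractions. If $\mathrm{char}\,R=0$, $(x^\infty)R^+$ denotes the ideal $(x^{1/n}: n\in\mathbb{N})R^+$, where $x^{1/n}\in R^+$ is a compatible system of roots (i.e. $(x^{1/nm})^m=x^{1/n}$). If $\mathrm{char}\,R=p>0$, $(x^\infty)R^+$ denotes $(x^{1/p^n}: n\ge 0)R^+$ with $x^{1/p^n}$ the unique $p^n$-th root. *)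

theory Defs
  imports Main "HOL-Computational_Algebra.Polynomial"
begin

text \<open>Setting: everything lives inside an ambient field K (a type 'k).
  K is taken to be an algebraic closure of Frac(R): it is algebraically closed and
  algebraic over the subring R.\<close>

definition subring_of :: "'k::field set \<Rightarrow> bool" where
  "subring_of R \<longleftrightarrow> 0 \<in> R \<and> 1 \<in> R \<and>
     (\<forall>a\<in>R. \<forall>b\<in>R. a + b \<in> R \<and> a - b \<in> R \<and> a * b \<in> R)"

definition alg_closed_field :: "'k::field itself \<Rightarrow> bool" where
  "alg_closed_field _ \<longleftrightarrow> (\<forall>p :: 'k poly. degree p > 0 \<longrightarrow> (\<exists>z. poly p z = 0))"

definition coeffs_in :: "'k::field poly \<Rightarrow> 'k set \<Rightarrow> bool" where
  "coeffs_in p R \<longleftrightarrow> (\<forall>i. coeff p i \<in> R)"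

definition algebraic_over :: "'k::field set \<Rightarrow> 'k \<Rightarrow> bool" where
  "algebraic_over R z \<longleftrightarrow> (\<exists>p. p \<noteq> 0 \<and> coeffs_in p R \<and> poly p z = 0)"

definition integral_over :: "'k::field set \<Rightarrow> 'k \<Rightarrow> bool" where
  "integral_over R z \<longleftrightarrow> (\<exists>p. lead_coeff p = 1 \<and> coeffs_in p R \<and> poly p z = 0)"

definition is_alg_closure_of :: "'k::field set \<Rightarrow> bool" where
  "is_alg_closure_of R \<longleftrightarrow> subring_of R \<and> alg_closed_field TYPE('k) \<and> (\<forall>z. algebraic_over R z)"

definition plus_closure :: "'k::field set \<Rightarrow> 'k set" where
  "plus_closure R = {z. integral_over R z}"

definition unit_in :: "'k::field set \<Rightarrow> 'k \<Rightarrow> bool" where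
  "unit_in S a \<longleftrightarrow> (\<exists>b\<in>S. a * b = 1)"

definition ideal_gen :: "'k::field set \<Rightarrow> 'k set \<Rightarrow> 'k set" where
  "ideal_gen S G = {y. \<exists>F a. finite F \<and> F \<subseteq> G \<and> (\<forall>g\<in>F. a g \<in> S) \<and> y = (\<Sum>g\<in>F. a g * g)}"

definition ideal_in :: "'k::field set \<Rightarrow> 'k set \<Rightarrow> bool" where
  "ideal_in S I \<longleftrightarrow> I \<subseteq> S \<and> 0 \<in> I \<and> (\<forall>a\<in>I. \<forall>b\<in>I. a + b \<in> I) \<and>
     (\<forall>s\<in>S. \<forall>a\<in>I. s * a \<in> I)"

definition noetherian_ring :: "'k::field set \<Rightarrow> bool" where
  "noetherian_ring R \<longleftrightarrow> (\<forall>I. ideal_in R I \<longrightarrow> (\<exists>F. finite F \<and> F \<subseteq> I \<and> I = ideal_gen R F))"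

definition nonunits :: "'k::field set \<Rightarrow> 'k set" where
  "nonunits R = {a \<in> R. \<not> unit_in R a}"

definition local_ring :: "'k::field set \<Rightarrow> bool" where
  "local_ring R \<longleftrightarrow> ideal_in R (nonunits R)"

text \<open>Henselian (Stacks 10.153.1): R local, and for every monic f in R[T] and every
  residue a0 with f(a0) = 0 and f'(a0) \<noteq> 0 in the residue field, there is a root
  a in R of f lifting a0.\<close>
definition henselian :: "'k::field set \<Rightarrow> bool" where
  "henselian R \<longleftrightarrow> local_ring R \<and>
     (\<forall>f a0. lead_coeff f = 1 \<and> coeffs_in f R \<and> a0 \<in> R \<and>
        poly f a0 \<in> nonunits R \<and> poly (pderiv f) a0 \<notin> nonunits R \<longrightarrow>
        (\<exists>a\<in>R. poly f a = 0 \<and> a - a0 \<in> nonunits R))"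

text \<open>Free S-module on a basis indexed by A: finitely supported functions A \<rightarrow> S.\<close>
definition free_mod :: "'k::field set \<Rightarrow> 'i set \<Rightarrow> ('i \<Rightarrow> 'k) set" where
  "free_mod S A = {u. (\<forall>i. u i \<in> S) \<and> finite {i. u i \<noteq> 0} \<and> (\<forall>i. i \<notin> A \<longrightarrow> u i = 0)}"

definition hom_FF :: "'k::field set \<Rightarrow> ('i \<Rightarrow> 'k) set \<Rightarrow> (('i \<Rightarrow> 'k) \<Rightarrow> ('j \<Rightarrow> 'k)) \<Rightarrow> bool" where
  "hom_FF S U f \<longleftrightarrow> (\<forall>u\<in>U. \<forall>v\<in>U. \<forall>a\<in>S.
      f (\<lambda>i. a * u i + v i) = (\<lambda>j. a * f u j + f v j))"

definition hom_FK :: "'k::field set \<Rightarrow> ('i \<Rightarrow> 'k) set \<Rightarrow> (('i \<Rightarrow> 'k) \<Rightarrow> 'k) \<Rightarrow> bool" where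
  "hom_FK S U f \<longleftrightarrow> (\<forall>u\<in>U. \<forall>v\<in>U. \<forall>a\<in>S. f (\<lambda>i. a * u i + v i) = a * f u + f v)"

definition hom_KF :: "'k::field set \<Rightarrow> 'k set \<Rightarrow> ('k \<Rightarrow> ('j \<Rightarrow> 'k)) \<Rightarrow> bool" where
  "hom_KF S M f \<longleftrightarrow> (\<forall>x\<in>M. \<forall>y\<in>M. \<forall>a\<in>S. f (a * x + y) = (\<lambda>j. a * f x j + f y j))"

text \<open>M (an S-submodule of K) has a free resolution 0 \<rightarrow> F1 \<rightarrow> F0 \<rightarrow> M \<rightarrow> 0 of length
  at most one by countably generated free S-modules (bases indexed by subsets of nat).\<close>
definition countable_free_res_le1 :: "'k::field set \<Rightarrow> 'k set \<Rightarrow> bool" where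
  "countable_free_res_le1 S M \<longleftrightarrow> (\<exists>(A::nat set) (B::nat set) \<phi> \<psi>.
      \<phi> ` free_mod S B \<subseteq> free_mod S A \<and> inj_on \<phi> (free_mod S B) \<and> hom_FF S (free_mod S B) \<phi> \<and>
      hom_FK S (free_mod S A) \<psi> \<and> \<psi> ` free_mod S A = M \<and>
      {u \<in> free_mod S A. \<psi> u = 0} = \<phi> ` free_mod S B)"

text \<open>Projective: M is a direct summand of a free S-module (on an index set of type 'k,
  which suffices since M \<subseteq> K is generated by a subset of K).\<close>
definition projective_mod :: "'k::field set \<Rightarrow> 'k set \<Rightarrow> bool" where
  "projective_mod S M \<longleftrightarrow> (\<exists>(J::'k set) \<sigma> \<pi>.
      hom_KF S M \<sigma> \<and> \<sigma> ` M \<subseteq> free_mod S J \<and>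
      hom_FK S (free_mod S J) \<pi> \<and> \<pi> ` free_mod S J \<subseteq> M \<and> (\<forall>y\<in>M. \<pi> (\<sigma> y) = y))"

text \<open>pd_S(M) \<le> 1 / = 1, for M \<subseteq> K.  pd \<le> 1 is witnessed by a free resolution of
  length \<le> 1 (free modules are projective); pd = 1 means pd \<le> 1 and M not projective.\<close>
definition pd_eq_1 :: "'k::field set \<Rightarrow> 'k set \<Rightarrow> bool" where
  "pd_eq_1 S M \<longleftrightarrow> countable_free_res_le1 S M \<and> \<not> projective_mod S M"

definition compatible_roots :: "'k::field \<Rightarrow> (nat \<Rightarrow> 'k) \<Rightarrow> bool" where
  "compatible_roots x r \<longleftrightarrow> r 1 = x \<and> (\<forall>n m. n \<ge> 1 \<longrightarrow> m \<ge> 1 \<longrightarrow> r (n * m) ^ m = r n)"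

end

theory Submission
  imports Defs "Jordan_Normal_Form.Char_Poly"
begin

definition sring :: "'a::comm_ring_1 set \<Rightarrow> bool" where
  "sring R \<longleftrightarrow> 0 \<in> R \<and> 1 \<in> R \<and>
     (\<forall>a\<in>R. \<forall>b\<in>R. a + b \<in> R \<and> a - b \<in> R \<and> a * b \<in> R)"

lemma subring_of_sring: "subring_of R = sring R"
  unfolding subring_of_def sring_def ..

lemma subringD:
  assumes "sring R"
  shows "0 \<in> R" "1 \<in> R" "a \<in> R \<Longrightarrow> b \<in> R \<Longrightarrow> a + b \<in> R"
    "a \<in> R \<Longrightarrow> b \<in> R \<Longrightarrow> a - b \<in> R" "a \<in> R \<Longrightarrow> b \<in> R \<Longrightarrow> a * b \<in> R"
  using assms unfolding sring_def by auto

lemma subring_uminus: "sring R \<Longrightarrow> a \<in> R \<Longrightarrow> - a \<in> R"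
  by (metis diff_0 subringD(1,4))

lemma subring_sum: "sring R \<Longrightarrow> (\<And>i. i \<in> A \<Longrightarrow> f i \<in> R) \<Longrightarrow> sum f A \<in> R"
  by (induction A rule: infinite_finite_induct) (auto intro: subringD)

lemma subring_prod: "sring R \<Longrightarrow> (\<And>i. i \<in> A \<Longrightarrow> f i \<in> R) \<Longrightarrow> prod f A \<in> R"
  by (induction A rule: infinite_finite_induct) (auto intro: subringD)

lemma subring_power: "sring R \<Longrightarrow> a \<in> R \<Longrightarrow> a ^ n \<in> R"
  by (induction n) (auto intro: subringD)

definition polys_in :: "'k::field set \<Rightarrow> 'k poly set" where
  "polys_in R = {p. coeffs_in p R}"

lemma polys_in_subring:
  assumes R: "sring R" shows "sring (polys_in R)"
proof -
  have "coeff (a * b) i \<in> R" if a: "\<forall>i. coeff a i \<in> R" and b: "\<forall>i. coeff b i \<in> R" for a b :: "'a poly" and i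
    unfolding coeff_mult using a b by (auto intro!: subring_sum[OF R] subringD(5)[OF R])
  moreover have "coeff (1::'a poly) i \<in> R" for i
    using subringD[OF R] by (simp add: coeff_1 del: One_nat_def)
  ultimately show ?thesis
    unfolding sring_def polys_in_def coeffs_in_def using subringD[OF R] by auto
qed

lemma pCons_polys_in: "sring R \<Longrightarrow> c \<in> R \<Longrightarrow> p \<in> polys_in R \<Longrightarrow> pCons c p \<in> polys_in R"
  unfolding polys_in_def coeffs_in_def by (auto simp: coeff_pCons split: nat.splits)

lemma const_polys_in: "sring R \<Longrightarrow> c \<in> R \<Longrightarrow> [:c:] \<in> polys_in R"
  using pCons_polys_in[of R c 0] polys_in_subring[of R] subringD(1) by blast

lemma det_trick_nat:
  fixes n :: nat and g :: "nat \<Rightarrow> 'k::field"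
  assumes R: "sring R" and g: "i0 < n" "g i0 \<noteq> 0"
    and c: "\<And>i k. c i k \<in> R"
    and eq: "\<And>i. i < n \<Longrightarrow> z * g i = (\<Sum>k<n. c i k * g k)"
  shows "integral_over R z"
proof -
  define A where "A = mat n n (\<lambda>(i,k). c i k)"
  define v where "v = vec n g"
  have A: "A \<in> carrier_mat n n" unfolding A_def by simp
  have "A *\<^sub>v v = z \<cdot>\<^sub>v v"
  proof (rule eq_vecI)
    fix i assume i: "i < dim_vec (z \<cdot>\<^sub>v v)"
    hence i': "i < n" unfolding v_def by simp
    have "(A *\<^sub>v v) $ i = (\<Sum>k<n. c i k * g k)"
      using i' unfolding A_def v_def by (simp add: scalar_prod_def lessThan_atLeast0 row_def)
    also have "\<dots> = z * g i" using eq[OF i'] by simp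
    finally show "(A *\<^sub>v v) $ i = (z \<cdot>\<^sub>v v) $ i" using i' unfolding v_def by simp
  qed (simp add: A_def v_def)
  moreover have "v \<noteq> 0\<^sub>v n"
  proof
    assume "v = 0\<^sub>v n" hence "v $ i0 = 0" using g by simp
    thus False using g unfolding v_def by simp
  qed
  ultimately have "eigenvalue A z"
    unfolding eigenvalue_def eigenvector_def using A by (auto simp: v_def intro!: exI[of _ v])
  hence root: "poly (char_poly A) z = 0" using eigenvalue_root_char_poly[OF A] by simp
  have mon: "lead_coeff (char_poly A) = 1" using degree_monic_char_poly[OF A] by simp
  have PR: "sring (polys_in R)" using polys_in_subring[OF R] .
  have ent: "char_poly_matrix A $$ (i,j) \<in> polys_in R" if "i < n" "j < n" for i j
  proof -
    have "char_poly_matrix A $$ (i,j) = (if i = j then [:0,1:] else 0) + [: - c i j :]"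
      using that A unfolding char_poly_matrix_def A_def by auto
    moreover have "[:0,1:] \<in> polys_in R"
      by (rule pCons_polys_in[OF R subringD(1)[OF R] const_polys_in[OF R subringD(2)[OF R]]])
    ultimately show ?thesis
      using subringD[OF PR] const_polys_in[OF R subring_uminus[OF R c]] by auto
  qed
  have sg: "(signof p :: 'k poly) \<in> polys_in R" for p
    unfolding sign_def using subringD[OF PR] subring_uminus[OF PR] by auto
  have CP: "dim_row (char_poly_matrix A) = n" "dim_col (char_poly_matrix A) = n"
    using char_poly_matrix_closed[OF A] by auto
  have "char_poly A \<in> polys_in R"
    unfolding char_poly_def det_def CP
  proof (simp, intro subring_sum[OF PR] subringD(5)[OF PR] sg subring_prod[OF PR])
    fix p i assume p: "p \<in> {p. p permutes {0..<n}}" and i: "i \<in> {0..<n}"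
    have "p i \<in> {0..<n}" using permutes_in_image[of p "{0..<n}" i] p i by auto
    thus "char_poly_matrix A $$ (i, p i) \<in> polys_in R" using ent i by auto
  qed
  thus ?thesis unfolding integral_over_def polys_in_def using root mon by auto
qed

lemma det_trick_fin:
  fixes g :: "'a \<Rightarrow> 'k::field"
  assumes R: "sring R" and I: "finite I" "i0 \<in> I" "g i0 \<noteq> 0"
    and c: "\<And>i k. i \<in> I \<Longrightarrow> k \<in> I \<Longrightarrow> c i k \<in> R"
    and eq: "\<And>i. i \<in> I \<Longrightarrow> z * g i = (\<Sum>k\<in>I. c i k * g k)"
  shows "integral_over R z"
proof -
  obtain h where h: "bij_betw h {0..<card I} I" using ex_bij_betw_nat_finite[OF I(1)] by blast
  define n where "n = card I"
  have hn: "bij_betw h {..<n} I" using h unfolding n_def by (simp add: atLeast0LessThan)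
  obtain j0 where j0: "j0 < n" "h j0 = i0" using hn I(2) unfolding bij_betw_def by auto
  have hI: "j < n \<Longrightarrow> h j \<in> I" for j using hn unfolding bij_betw_def by auto
  define c' where "c' i k = (if i < n \<and> k < n then c (h i) (h k) else 0)" for i k
  show ?thesis
  proof (rule det_trick_nat[OF R j0(1), of "g \<circ> h" c'])
    show "(g \<circ> h) j0 \<noteq> 0" using j0 I by simp
    show "c' i k \<in> R" for i k unfolding c'_def using c hI subringD(1)[OF R] by auto
    fix i assume i: "i < n"
    have "z * (g \<circ> h) i = (\<Sum>k\<in>I. c (h i) k * g k)" using eq hI[OF i] by simp
    also have "\<dots> = (\<Sum>k<n. c (h i) (h k) * g (h k))"
      using sum.reindex_bij_betw[OF hn, of "\<lambda>k. c (h i) k * g k"] by simp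
    also have "\<dots> = (\<Sum>k<n. c' i k * (g \<circ> h) k)"
      by (rule sum.cong) (auto simp: c'_def i)
    finally show "z * (g \<circ> h) i = (\<Sum>k<n. c' i k * (g \<circ> h) k)" .
  qed
qed

definition comp_rep :: "'k::field set \<Rightarrow> 'k \<Rightarrow> nat \<Rightarrow> (nat \<Rightarrow> nat \<Rightarrow> 'k) \<Rightarrow> bool" where
  "comp_rep R x m c \<longleftrightarrow> m \<ge> 1 \<and> (\<forall>i k. c i k \<in> R) \<and> (\<forall>i<m. x * x ^ i = (\<Sum>k<m. c i k * x ^ k))"

lemma integral_comp_rep:
  assumes R: "sring R" and x: "integral_over R x"
  shows "\<exists>m c. comp_rep R x m c"
proof -
  obtain P where P: "lead_coeff P = 1" "coeffs_in P R" "poly P x = 0"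
    using x unfolding integral_over_def by auto
  define m where "m = degree P"
  have m1: "m \<ge> 1"
  proof (rule ccontr)
    assume "\<not> m \<ge> 1" hence "degree P = 0" unfolding m_def by simp
    hence "poly P x = 1" using P(1) unfolding poly_altdef by simp
    thus False using P(3) by simp
  qed
  define c where "c i k = (if Suc i < m then of_bool (k = Suc i) else - coeff P k)" for i k
  have cR: "c i k \<in> R" for i k
    unfolding c_def using subringD[OF R] subring_uminus[OF R] P(2) unfolding coeffs_in_def by auto
  have top: "x ^ m = - (\<Sum>k<m. coeff P k * x ^ k)"
  proof -
    have "0 = (\<Sum>k\<le>m. coeff P k * x ^ k)" using P(3) unfolding poly_altdef m_def by simp
    also have "\<dots> = (\<Sum>k<m. coeff P k * x ^ k) + x ^ m"
      using P(1) unfolding m_def by (simp add: lessThan_Suc_atMost[symmetric])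
    finally show ?thesis by (simp add: eq_neg_iff_add_eq_0 add.commute)
  qed
  have "x * x ^ i = (\<Sum>k<m. c i k * x ^ k)" if i: "i < m" for i
  proof (cases "Suc i < m")
    case True
    have "(\<Sum>k<m. c i k * x ^ k) = (\<Sum>k<m. (if k = Suc i then x ^ k else 0))"
      by (rule sum.cong) (auto simp: c_def True)
    also have "\<dots> = x ^ Suc i" using True by (simp add: sum.delta)
    finally show ?thesis by simp
  next
    case False
    hence "Suc i = m" using i by simp
    hence "x * x ^ i = x ^ m" by auto
    also have "\<dots> = (\<Sum>k<m. c i k * x ^ k)" unfolding top using False
      by (simp add: c_def sum_negf)
    finally show ?thesis .
  qed
  thus ?thesis unfolding comp_rep_def using m1 cR by blast
qed

lemma comp_rep_integral:
  assumes R: "sring R" and "comp_rep R x m c"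
  shows "integral_over R x"
  using assms unfolding comp_rep_def
  by (intro det_trick_nat[OF R, of 0 m "\<lambda>i. x ^ i" c x]) auto

lemma integral_add:
  assumes R: "sring R" and x: "integral_over R x" and y: "integral_over R y"
  shows "integral_over R (x + y)"
proof -
  obtain m c where mc: "comp_rep R x m c" using integral_comp_rep[OF R x] by blast
  obtain n d where nd: "comp_rep R y n d" using integral_comp_rep[OF R y] by blast
  define C where "C = (\<lambda>(i::nat,j::nat) (k::nat,l::nat). (if l = j then c i k else 0) + (if k = i then d j l else 0))"
  show ?thesis
  proof (rule det_trick_fin[OF R, of "{..<m} \<times> {..<n}" "(0,0)" "\<lambda>(i,j). x ^ i * y ^ j" C])
    show "finite ({..<m} \<times> {..<n})" by simp
    show "(0,0) \<in> {..<m} \<times> {..<n}" using mc nd unfolding comp_rep_def by auto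
    show "(case (0, 0) of (i, j) \<Rightarrow> x ^ i * y ^ j) \<noteq> 0" by simp
    show "C i k \<in> R" for i k using mc nd subringD[OF R] unfolding comp_rep_def C_def
      by (auto split: prod.splits)
    fix ij assume ij: "ij \<in> {..<m} \<times> {..<n}"
    obtain i j where ijd: "ij = (i,j)" "i < m" "j < n" using ij by auto
    have ex: "x * x ^ i = (\<Sum>k<m. c i k * x ^ k)" "y * y ^ j = (\<Sum>l<n. d j l * y ^ l)"
      using mc nd ijd unfolding comp_rep_def by auto
    have P1: "(\<Sum>k<m. \<Sum>l<n. (if l = j then c i k * (x ^ k * y ^ l) else 0))
       = (\<Sum>k<m. c i k * (x ^ k * y ^ j))"
      by (intro sum.cong refl) (simp add: ijd)
    have "(\<Sum>k<m. \<Sum>l<n. (if k = i then d j l * (x ^ k * y ^ l) else 0))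
       = (\<Sum>k<m. if k = i then (\<Sum>l<n. d j l * (x ^ k * y ^ l)) else 0)"
      by (intro sum.cong refl) simp
    also have "\<dots> = (\<Sum>l<n. d j l * (x ^ i * y ^ l))" using ijd by simp
    finally have P2: "(\<Sum>k<m. \<Sum>l<n. (if k = i then d j l * (x ^ k * y ^ l) else 0))
       = (\<Sum>l<n. d j l * (x ^ i * y ^ l))" .
    have "(\<Sum>kl\<in>{..<m} \<times> {..<n}. C ij kl * (case kl of (k, l) \<Rightarrow> x ^ k * y ^ l))
       = (\<Sum>(k,l)\<in>{..<m} \<times> {..<n}. ((if l = j then c i k else 0) + (if k = i then d j l else 0)) * (x ^ k * y ^ l))"
      by (rule sum.cong) (auto simp: C_def ijd)
    also have "\<dots> = (\<Sum>k<m. \<Sum>l<n. ((if l = j then c i k else 0) + (if k = i then d j l else 0)) * (x ^ k * y ^ l))"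
      by (rule sum.cartesian_product[symmetric])
    also have "\<dots> = (\<Sum>k<m. \<Sum>l<n. (if l = j then c i k * (x ^ k * y ^ l) else 0)
                   + (if k = i then d j l * (x ^ k * y ^ l) else 0))"
      by (intro sum.cong refl) (auto simp: distrib_right)
    also have "\<dots> = (\<Sum>k<m. \<Sum>l<n. (if l = j then c i k * (x ^ k * y ^ l) else 0))
                   + (\<Sum>k<m. \<Sum>l<n. (if k = i then d j l * (x ^ k * y ^ l) else 0))"
      by (simp only: sum.distrib)
    also have "\<dots> = (\<Sum>k<m. c i k * (x ^ k * y ^ j)) + (\<Sum>l<n. d j l * (x ^ i * y ^ l))"
      using P1 P2 by simp
    also have "\<dots> = (x * x ^ i) * y ^ j + x ^ i * (y * y ^ j)"
      unfolding ex by (simp add: sum_distrib_left sum_distrib_right mult_ac)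
    also have "\<dots> = (x + y) * (case ij of (i, j) \<Rightarrow> x ^ i * y ^ j)"
      by (simp add: ijd algebra_simps)
    finally show "(x + y) * (case ij of (i, j) \<Rightarrow> x ^ i * y ^ j) =
       (\<Sum>kl\<in>{..<m} \<times> {..<n}. C ij kl * (case kl of (k, l) \<Rightarrow> x ^ k * y ^ l))" by simp
  qed
qed

lemma integral_mult:
  assumes R: "sring R" and x: "integral_over R x" and y: "integral_over R y"
  shows "integral_over R (x * y)"
proof -
  obtain m c where mc: "comp_rep R x m c" using integral_comp_rep[OF R x] by blast
  obtain n d where nd: "comp_rep R y n d" using integral_comp_rep[OF R y] by blast
  define C where "C = (\<lambda>(i::nat,j::nat) (k::nat,l::nat). c i k * d j l)"
  show ?thesis
  proof (rule det_trick_fin[OF R, of "{..<m} \<times> {..<n}" "(0,0)" "\<lambda>(i,j). x ^ i * y ^ j" C])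
    show "finite ({..<m} \<times> {..<n})" by simp
    show "(0,0) \<in> {..<m} \<times> {..<n}" using mc nd unfolding comp_rep_def by auto
    show "(case (0, 0) of (i, j) \<Rightarrow> x ^ i * y ^ j) \<noteq> 0" by simp
    show "C i k \<in> R" for i k using mc nd subringD[OF R] unfolding comp_rep_def C_def
      by (auto split: prod.splits)
    fix ij assume ij: "ij \<in> {..<m} \<times> {..<n}"
    obtain i j where ijd: "ij = (i,j)" "i < m" "j < n" using ij by auto
    have ex: "x * x ^ i = (\<Sum>k<m. c i k * x ^ k)" "y * y ^ j = (\<Sum>l<n. d j l * y ^ l)"
      using mc nd ijd unfolding comp_rep_def by auto
    have "(\<Sum>kl\<in>{..<m} \<times> {..<n}. C ij kl * (case kl of (k, l) \<Rightarrow> x ^ k * y ^ l))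
       = (\<Sum>(k,l)\<in>{..<m} \<times> {..<n}. (c i k * x ^ k) * (d j l * y ^ l))"
      by (rule sum.cong) (auto simp: C_def ijd mult_ac)
    also have "\<dots> = (\<Sum>k<m. \<Sum>l<n. (c i k * x ^ k) * (d j l * y ^ l))"
      by (rule sum.cartesian_product[symmetric])
    also have "\<dots> = (x * x ^ i) * (y * y ^ j)"
      unfolding ex by (simp add: sum_product)
    also have "\<dots> = (x * y) * (case ij of (i, j) \<Rightarrow> x ^ i * y ^ j)"
      by (simp add: ijd algebra_simps)
    finally show "(x * y) * (case ij of (i, j) \<Rightarrow> x ^ i * y ^ j) =
       (\<Sum>kl\<in>{..<m} \<times> {..<n}. C ij kl * (case kl of (k, l) \<Rightarrow> x ^ k * y ^ l))" by simp
  qed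
qed

lemma integral_uminus:
  assumes R: "sring R" and x: "integral_over R x"
  shows "integral_over R (- x)"
proof -
  obtain m c where mc: "comp_rep R x m c" using integral_comp_rep[OF R x] by blast
  show ?thesis
  proof (rule det_trick_nat[OF R, of 0 m "\<lambda>i. x ^ i" "\<lambda>i k. - c i k"])
    show "0 < m" using mc unfolding comp_rep_def by auto
    show "- c i k \<in> R" for i k using mc subring_uminus[OF R] unfolding comp_rep_def by auto
    fix i assume "i < m"
    hence "x * x ^ i = (\<Sum>k<m. c i k * x ^ k)" using mc unfolding comp_rep_def by auto
    thus "- x * x ^ i = (\<Sum>k<m. - c i k * x ^ k)" by (simp add: sum_negf)
  qed simp
qed

lemma integral_in_R: "sring R \<Longrightarrow> r \<in> R \<Longrightarrow> integral_over R r"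
  unfolding integral_over_def coeffs_in_def
  by (rule exI[of _ "[:-r, 1:]"]) (auto simp: coeff_pCons subring_uminus subringD split: nat.splits)

lemma integral_root:
  assumes R: "sring R" and x: "integral_over R x" and q: "q \<ge> 1" and z: "z ^ q = x"
  shows "integral_over R z"
proof -
  obtain m c where mc: "comp_rep R x m c" using integral_comp_rep[OF R x] by blast
  define C where "C = (\<lambda>(a::nat,b::nat) (a'::nat,b'::nat).
     if Suc a < q then of_bool (a' = Suc a \<and> b' = b) else of_bool (a' = 0) * c b b')"
  show ?thesis
  proof (rule det_trick_fin[OF R, of "{..<q} \<times> {..<m}" "(0,0)" "\<lambda>(a,b). z ^ a * x ^ b" C])
    show "finite ({..<q} \<times> {..<m})" by simp
    show "(0,0) \<in> {..<q} \<times> {..<m}" using mc q unfolding comp_rep_def by auto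
    show "(case (0, 0) of (i, j) \<Rightarrow> z ^ i * x ^ j) \<noteq> 0" by simp
    show "C i k \<in> R" for i k using mc subringD[OF R] unfolding comp_rep_def C_def
      by (auto split: prod.splits)
    fix ab assume ab: "ab \<in> {..<q} \<times> {..<m}"
    obtain a b where abd: "ab = (a,b)" "a < q" "b < m" using ab by auto
    have ex: "x * x ^ b = (\<Sum>l<m. c b l * x ^ l)" using mc abd unfolding comp_rep_def by auto
    show "z * (case ab of (a, b) \<Rightarrow> z ^ a * x ^ b) =
       (\<Sum>kl\<in>{..<q} \<times> {..<m}. C ab kl * (case kl of (k, l) \<Rightarrow> z ^ k * x ^ l))"
    proof (cases "Suc a < q")
      case True
      have "(\<Sum>kl\<in>{..<q} \<times> {..<m}. C ab kl * (case kl of (k, l) \<Rightarrow> z ^ k * x ^ l))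
         = (\<Sum>kl\<in>{..<q} \<times> {..<m}. if kl = (Suc a, b) then z ^ Suc a * x ^ b else 0)"
        by (rule sum.cong) (auto simp: C_def abd True)
      also have "\<dots> = z ^ Suc a * x ^ b" using True abd by (simp add: sum.delta')
      finally show ?thesis by (simp add: abd)
    next
      case False
      hence qa: "q = Suc a" using abd by simp
      have "(\<Sum>kl\<in>{..<q} \<times> {..<m}. C ab kl * (case kl of (k, l) \<Rightarrow> z ^ k * x ^ l))
         = (\<Sum>(k,l)\<in>{..<q} \<times> {..<m}. (if k = 0 then c b l * x ^ l else 0))"
        by (rule sum.cong) (auto simp: C_def abd False)
      also have "\<dots> = (\<Sum>k<q. \<Sum>l<m. (if k = 0 then c b l * x ^ l else 0))"
        by (rule sum.cartesian_product[symmetric])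
      also have "\<dots> = (\<Sum>k<q. if k = 0 then (\<Sum>l<m. c b l * x ^ l) else 0)"
        by (intro sum.cong refl) simp
      also have "\<dots> = (\<Sum>l<m. c b l * x ^ l)"
        using q by simp
      also have "\<dots> = z ^ q * x ^ b" unfolding ex[symmetric] z by simp
      finally show ?thesis by (simp add: abd qa)
    qed
  qed
qed

lemma plus_closure_sring:
  assumes R: "sring R" shows "sring (plus_closure R)"
proof -
  have "integral_over R (a - b)" if "integral_over R a" "integral_over R b" for a b
    using integral_add[OF R that(1) integral_uminus[OF R that(2)]] by simp
  thus ?thesis unfolding sring_def plus_closure_def
    using integral_in_R[OF R] subringD[OF R] integral_add[OF R] integral_mult[OF R] integral_uminus[OF R]
    by auto
qed


lemma ideal_gen_least:
  assumes "0 \<in> T" "\<And>a b. a \<in> T \<Longrightarrow> b \<in> T \<Longrightarrow> a + b \<in> T"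
    and "\<And>s g. s \<in> S \<Longrightarrow> g \<in> G \<Longrightarrow> s * g \<in> T"
  shows "ideal_gen S G \<subseteq> T"
proof
  fix y assume "y \<in> ideal_gen S G"
  then obtain F c where F: "finite F" "F \<subseteq> G" "\<forall>g\<in>F. c g \<in> S" "y = (\<Sum>g\<in>F. c g * g)"
    unfolding ideal_gen_def by blast
  have "(\<Sum>g\<in>F. c g * g) \<in> T" using F(1-3)
  proof (induction F rule: finite_induct)
    case (insert x F)
    have "c x * x \<in> T" using insert.prems by (intro assms(3)) auto
    moreover have "(\<Sum>g\<in>F. c g * g) \<in> T" using insert by auto
    ultimately show ?case using assms(2) insert.hyps by simp
  qed (simp add: assms(1))
  thus "y \<in> T" using F(4) by simp
qed

lemma ideal_gen_0: "0 \<in> ideal_gen S G"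
  unfolding ideal_gen_def by (rule CollectI, rule exI[of _ "{}"]) auto

lemma sum_if_subset: "finite A \<Longrightarrow> B \<subseteq> A \<Longrightarrow> (\<Sum>g\<in>A. if g \<in> B then f g else 0) = sum f B"
  by (metis sum.inter_restrict inf.absorb_iff2)

lemma ideal_gen_add:
  assumes S: "sring S" and "y1 \<in> ideal_gen S G" "y2 \<in> ideal_gen S G"
  shows "y1 + y2 \<in> ideal_gen S G"
proof -
  obtain F1 c1 where F1: "finite F1" "F1 \<subseteq> G" "\<forall>g\<in>F1. c1 g \<in> S" "y1 = (\<Sum>g\<in>F1. c1 g * g)"
    using assms(2) unfolding ideal_gen_def by blast
  obtain F2 c2 where F2: "finite F2" "F2 \<subseteq> G" "\<forall>g\<in>F2. c2 g \<in> S" "y2 = (\<Sum>g\<in>F2. c2 g * g)"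
    using assms(3) unfolding ideal_gen_def by blast
  define F where "F = F1 \<union> F2"
  define c where "c g = (if g \<in> F1 then c1 g else 0) + (if g \<in> F2 then c2 g else 0)" for g
  have "(\<Sum>g\<in>F. c g * g) = (\<Sum>g\<in>F. if g \<in> F1 then c1 g * g else 0) + (\<Sum>g\<in>F. if g \<in> F2 then c2 g * g else 0)"
    unfolding c_def sum.distrib[symmetric] by (intro sum.cong refl) (auto simp: distrib_right)
  also have "\<dots> = y1 + y2"
    unfolding F1(4) F2(4) F_def using F1(1) F2(1) by (simp add: sum_if_subset)
  finally have "y1 + y2 = (\<Sum>g\<in>F. c g * g)" ..
  moreover have "\<forall>g\<in>F. c g \<in> S" using F1(3) F2(3) subringD[OF S] unfolding c_def by auto
  ultimately show ?thesis unfolding ideal_gen_def using F1(1,2) F2(1,2) unfolding F_def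
    by (intro CollectI exI[of _ "F1 \<union> F2"] exI[of _ c]) simp
qed

lemma ideal_gen_smult:
  assumes S: "sring S" and "s \<in> S" "y \<in> ideal_gen S G"
  shows "s * y \<in> ideal_gen S G"
proof -
  obtain F c where F: "finite F" "F \<subseteq> G" "\<forall>g\<in>F. c g \<in> S" "y = (\<Sum>g\<in>F. c g * g)"
    using assms(3) unfolding ideal_gen_def by blast
  have "s * y = (\<Sum>g\<in>F. (s * c g) * g)" using F(4) by (simp add: sum_distrib_left mult_ac)
  moreover have "\<forall>g\<in>F. s * c g \<in> S" using F(3) subringD(5)[OF S assms(2)] by auto
  ultimately show ?thesis unfolding ideal_gen_def using F(1,2)
    by (intro CollectI exI[of _ F] exI[of _ "\<lambda>g. s * c g"]) simp
qed

lemma ideal_gen_gen: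
  assumes S: "sring S" and "g \<in> G" shows "g \<in> ideal_gen S G"
  unfolding ideal_gen_def using assms(2) subringD(2)[OF S]
  by (intro CollectI exI[of _ "{g}"] exI[of _ "\<lambda>_. 1"]) simp

lemma ideal_gen_sum:
  assumes S: "sring S" shows "(\<And>i. i \<in> A \<Longrightarrow> f i \<in> ideal_gen S G) \<Longrightarrow> sum f A \<in> ideal_gen S G"
proof (induction A rule: infinite_finite_induct)
  case (insert x F)
  thus ?case using ideal_gen_add[OF S, of "f x" G "sum f F"] by simp
qed (simp_all add: ideal_gen_0)

lemma ideal_gen_mono:
  assumes S: "sring S" and "G \<subseteq> ideal_gen S H"
  shows "ideal_gen S G \<subseteq> ideal_gen S H"
proof (rule ideal_gen_least)
  show "0 \<in> ideal_gen S H" by (rule ideal_gen_0)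
  show "a + b \<in> ideal_gen S H" if "a \<in> ideal_gen S H" "b \<in> ideal_gen S H" for a b
    using ideal_gen_add[OF S that] .
  show "s * g \<in> ideal_gen S H" if "s \<in> S" "g \<in> G" for s g
    using ideal_gen_smult[OF S that(1)] assms(2) that(2) by auto
qed

lemma ideal_gen_subset:
  assumes S: "sring S" and "G \<subseteq> S" shows "ideal_gen S G \<subseteq> S"
proof (rule ideal_gen_least)
  show "0 \<in> S" using subringD(1)[OF S] .
  show "a + b \<in> S" if "a \<in> S" "b \<in> S" for a b using subringD(3)[OF S that] .
  show "s * g \<in> S" if "s \<in> S" "g \<in> G" for s g
    using subringD(5)[OF S that(1)] assms(2) that(2) by auto
qed


definition psi_map :: "(nat \<Rightarrow> 'k::field) \<Rightarrow> (nat \<Rightarrow> 'k) \<Rightarrow> 'k" where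
  "psi_map a u = (\<Sum>i\<in>{i. u i \<noteq> 0}. u i * a i)"

definition phi_map :: "(nat \<Rightarrow> 'k::field) \<Rightarrow> (nat \<Rightarrow> 'k) \<Rightarrow> (nat \<Rightarrow> 'k)" where
  "phi_map d v = (\<lambda>j. v j - (case j of 0 \<Rightarrow> 0 | Suc k \<Rightarrow> d k * v k))"

lemma free_mod_UNIV: "u \<in> free_mod S UNIV \<longleftrightarrow> (\<forall>i. u i \<in> S) \<and> finite {i. u i \<noteq> 0}"
  unfolding free_mod_def by simp

lemma psi_eq:
  assumes "finite F" "{i. u i \<noteq> 0} \<subseteq> F"
  shows "psi_map a u = (\<Sum>i\<in>F. u i * a i)"
  unfolding psi_map_def by (rule sum.mono_neutral_left) (use assms in auto)

lemma psi_hom: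
  fixes a :: "nat \<Rightarrow> 'k::field"
  assumes S: "sring S"
  shows "hom_FK S (free_mod S UNIV) (psi_map a)"
  unfolding hom_FK_def
proof (intro ballI)
  fix u v :: "nat \<Rightarrow> 'k" and s assume u: "u \<in> free_mod S UNIV" and v: "v \<in> free_mod S UNIV" and s: "s \<in> S"
  define F where "F = {i. u i \<noteq> 0} \<union> {i. v i \<noteq> 0}"
  have F: "finite F" using u v unfolding F_def free_mod_UNIV by auto
  have "psi_map a (\<lambda>i. s * u i + v i) = (\<Sum>i\<in>F. (s * u i + v i) * a i)"
    by (rule psi_eq[OF F]) (auto simp: F_def)
  also have "\<dots> = s * (\<Sum>i\<in>F. u i * a i) + (\<Sum>i\<in>F. v i * a i)"
    by (simp add: sum.distrib[symmetric] sum_distrib_left algebra_simps)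
  also have "\<dots> = s * psi_map a u + psi_map a v"
    using psi_eq[OF F, of u a] psi_eq[OF F, of v a] by (auto simp: F_def)
  finally show "psi_map a (\<lambda>i. s * u i + v i) = s * psi_map a u + psi_map a v" .
qed

lemma psi_zero: "psi_map a (\<lambda>_. 0) = 0"
  unfolding psi_map_def by simp

lemma phi_in_free:
  assumes S: "sring S" and d: "\<And>n. d n \<in> S" and v: "v \<in> free_mod S UNIV"
  shows "phi_map d v \<in> free_mod S UNIV"
  unfolding free_mod_UNIV
proof
  show "\<forall>i. phi_map d v i \<in> S"
    using v d unfolding free_mod_UNIV phi_map_def
    by (auto intro!: subringD[OF S] split: nat.splits)
  have "{i. phi_map d v i \<noteq> 0} \<subseteq> {i. v i \<noteq> 0} \<union> Suc ` {i. v i \<noteq> 0}"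
  proof
    fix i assume i: "i \<in> {i. phi_map d v i \<noteq> 0}"
    show "i \<in> {i. v i \<noteq> 0} \<union> Suc ` {i. v i \<noteq> 0}"
    proof (cases i)
      case 0 thus ?thesis using i unfolding phi_map_def by auto
    next
      case (Suc k) thus ?thesis using i unfolding phi_map_def by (cases "v k = 0") auto
    qed
  qed
  thus "finite {i. phi_map d v i \<noteq> 0}"
    using v unfolding free_mod_UNIV by (meson finite_UnI finite_imageI finite_subset)
qed

lemma phi_inj: "inj_on (phi_map d) X"
proof (rule inj_onI)
  fix v w assume eq: "phi_map d v = phi_map d w"
  have "v j = w j" for j
  proof (induction j)
    case 0 thus ?case using fun_cong[OF eq, of 0] unfolding phi_map_def by simp
  next
    case (Suc j) thus ?case using fun_cong[OF eq, of "Suc j"] unfolding phi_map_def by simp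
  qed
  thus "v = w" by auto
qed

lemma phi_hom: "hom_FF S X (phi_map d)"
  unfolding hom_FF_def phi_map_def
  by (auto simp: fun_eq_iff algebra_simps split: nat.splits)

lemma telescope:
  assumes ad: "\<And>n. a n = d n * a (Suc n)"
  shows "(\<Sum>j<Suc K. phi_map d v j * a j) = v K * a K"
proof (induction K)
  case 0 thus ?case unfolding phi_map_def by simp
next
  case (Suc K)
  have "(\<Sum>j<Suc (Suc K). phi_map d v j * a j) = v K * a K + (v (Suc K) - d K * v K) * a (Suc K)"
    using Suc unfolding phi_map_def by simp
  also have "\<dots> = v (Suc K) * a (Suc K)" using ad[of K] by (simp add: algebra_simps)
  finally show ?case .
qed

lemma resolution:
  fixes a d :: "nat \<Rightarrow> 'k::field"
  assumes S: "sring S" and aS: "\<And>n. a n \<in> S" and a0: "\<And>n. a n \<noteq> 0"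
    and dS: "\<And>n. d n \<in> S" and ad: "\<And>n. a n = d n * a (Suc n)"
  shows "countable_free_res_le1 S (ideal_gen S (range a))"
  unfolding countable_free_res_le1_def
proof (intro exI conjI)
  let ?F = "free_mod S (UNIV :: nat set)"
  show "phi_map d ` ?F \<subseteq> ?F" using phi_in_free[OF S dS] by auto
  show "inj_on (phi_map d) ?F" by (rule phi_inj)
  show "hom_FF S ?F (phi_map d)" by (rule phi_hom)
  show hom: "hom_FK S ?F (psi_map a)" by (rule psi_hom[OF S])
  have zF: "(\<lambda>_. 0) \<in> ?F" using subringD(1)[OF S] unfolding free_mod_UNIV by simp
  show "psi_map a ` ?F = ideal_gen S (range a)"
  proof
    show "psi_map a ` ?F \<subseteq> ideal_gen S (range a)"
    proof
      fix y assume "y \<in> psi_map a ` ?F"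
      then obtain u where u: "u \<in> ?F" "y = psi_map a u" by blast
      have "psi_map a u \<in> ideal_gen S (range a)"
        unfolding psi_map_def
      proof (rule ideal_gen_sum[OF S])
        fix i show "u i * a i \<in> ideal_gen S (range a)"
          using u(1) unfolding free_mod_UNIV
          by (intro ideal_gen_smult[OF S] ideal_gen_gen[OF S]) auto
      qed
      thus "y \<in> ideal_gen S (range a)" using u by simp
    qed
  next
    show "ideal_gen S (range a) \<subseteq> psi_map a ` ?F"
    proof (rule ideal_gen_least)
      show "0 \<in> psi_map a ` ?F" using zF psi_zero[of a] by (metis image_eqI)
      fix y1 y2 assume "y1 \<in> psi_map a ` ?F" "y2 \<in> psi_map a ` ?F"
      then obtain u v where uv: "u \<in> ?F" "v \<in> ?F" "y1 = psi_map a u" "y2 = psi_map a v" by blast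
      have "(\<lambda>i. 1 * u i + v i) \<in> ?F"
        using uv unfolding free_mod_UNIV
        by (auto intro!: subringD[OF S] intro: finite_subset[of _ "{i. u i \<noteq> 0} \<union> {i. v i \<noteq> 0}"])
      moreover have "psi_map a (\<lambda>i. 1 * u i + v i) = 1 * psi_map a u + psi_map a v"
        using hom uv(1,2) subringD(2)[OF S] unfolding hom_FK_def by blast
      hence "psi_map a (\<lambda>i. 1 * u i + v i) = y1 + y2" using uv by simp
      ultimately show "y1 + y2 \<in> psi_map a ` ?F" by (metis image_eqI)
    next
      fix s g assume s: "s \<in> S" and g: "g \<in> range a"
      then obtain i where gi: "g = a i" by blast
      define e where "e = (\<lambda>j. if j = i then s else 0)"
      have eF: "e \<in> ?F" using s subringD(1)[OF S] unfolding free_mod_UNIV e_def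
        by (auto intro: finite_subset[of _ "{i}"])
      have "psi_map a e = (\<Sum>j\<in>{i}. e j * a j)" by (rule psi_eq) (auto simp: e_def)
      hence "psi_map a e = s * g" by (simp add: e_def gi)
      thus "s * g \<in> psi_map a ` ?F" using eF by (metis image_eqI)
    qed
  qed
  show "{u \<in> ?F. psi_map a u = 0} = phi_map d ` ?F"
  proof
    show "phi_map d ` ?F \<subseteq> {u \<in> ?F. psi_map a u = 0}"
    proof
      fix w assume "w \<in> phi_map d ` ?F"
      then obtain v where v: "v \<in> ?F" "w = phi_map d v" by blast
      have wF: "w \<in> ?F" using phi_in_free[OF S dS v(1)] v(2) by simp
      obtain N where N: "{i. v i \<noteq> 0} \<subseteq> {..<N}"
        using v(1) unfolding free_mod_UNIV by (meson finite_nat_bounded)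
      have vN: "v N = 0" using N by auto
      have "{i. w i \<noteq> 0} \<subseteq> {..<Suc N}"
      proof
        fix i assume "i \<in> {i. w i \<noteq> 0}"
        hence "w i \<noteq> 0" by simp
        show "i \<in> {..<Suc N}"
        proof (rule ccontr)
          assume "i \<notin> {..<Suc N}"
          then obtain k where "i = Suc k" "k \<ge> N" by (cases i) auto
          moreover have "v i = 0" "v k = 0" using N \<open>i \<notin> _\<close> calculation by auto
          ultimately show False using \<open>w i \<noteq> 0\<close> v(2) unfolding phi_map_def by simp
        qed
      qed
      hence "psi_map a w = (\<Sum>j<Suc N. w j * a j)" by (intro psi_eq) auto
      also have "\<dots> = v N * a N" unfolding v(2) by (rule telescope[of a d, OF ad])
      finally show "w \<in> {u \<in> ?F. psi_map a u = 0}" using wF vN by simp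
    qed
  next
    show "{u \<in> ?F. psi_map a u = 0} \<subseteq> phi_map d ` ?F"
    proof
      fix u assume "u \<in> {u \<in> ?F. psi_map a u = 0}"
      hence u: "u \<in> ?F" "psi_map a u = 0" by auto
      obtain N where N: "{i. u i \<noteq> 0} \<subseteq> {..<N}"
        using u(1) unfolding free_mod_UNIV by (meson finite_nat_bounded)
      define v where "v j = (\<Sum>i<Suc j. u i * a i) / a j" for j
      have va: "v j * a j = (\<Sum>i<Suc j. u i * a i)" for j unfolding v_def using a0[of j] by simp
      have rec: "v (Suc j) = d j * v j + u (Suc j)" for j
      proof -
        have "v (Suc j) * a (Suc j) = v j * a j + u (Suc j) * a (Suc j)"
          unfolding va by simp
        also have "\<dots> = (d j * v j + u (Suc j)) * a (Suc j)" using ad[of j] by (simp add: algebra_simps)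
        finally show ?thesis using a0[of "Suc j"] by simp
      qed
      have vS: "v j \<in> S" for j
      proof (induction j)
        case 0 thus ?case using u(1) unfolding free_mod_UNIV using va[of 0] a0[of 0] by simp
      next
        case (Suc j) thus ?case unfolding rec using u(1) dS unfolding free_mod_UNIV
          by (auto intro!: subringD[OF S])
      qed
      have vz: "v j = 0" if "j \<ge> N" for j
      proof -
        have "psi_map a u = (\<Sum>i<Suc j. u i * a i)" using N that by (intro psi_eq) auto
        hence "v j * a j = 0" using va u(2) by simp
        thus ?thesis using a0[of j] by simp
      qed
      have vF: "v \<in> ?F" unfolding free_mod_UNIV
      proof
        show "\<forall>i. v i \<in> S" using vS by auto
        have "{i. v i \<noteq> 0} \<subseteq> {..<N}" using vz by (auto simp: not_less[symmetric])
        thus "finite {i. v i \<noteq> 0}" using finite_subset by blast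
      qed
      have "phi_map d v = u"
      proof
        fix j show "phi_map d v j = u j"
        proof (cases j)
          case 0 thus ?thesis unfolding phi_map_def using va[of 0] a0[of 0] by simp
        next
          case (Suc k) thus ?thesis unfolding phi_map_def using rec[of k] by simp
        qed
      qed
      thus "u \<in> phi_map d ` ?F" using vF by (metis image_eqI)
    qed
  qed
qed


lemma chain_div:
  assumes S: "sring S" and aS: "\<And>n. a n \<in> S" and ad: "\<And>n. a n = d n * a (Suc n)" and dS: "\<And>n. d n \<in> S"
  shows "i \<le> N \<Longrightarrow> \<exists>h\<in>S. a i = a N * h"
proof (induction N)
  case 0 thus ?case using subringD(2)[OF S] by (intro bexI[of _ 1]) auto
next
  case (Suc N)
  show ?case
  proof (cases "i = Suc N")
    case True thus ?thesis using subringD(2)[OF S] by (intro bexI[of _ 1]) auto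
  next
    case False
    then obtain h where h: "h \<in> S" "a i = a N * h" using Suc by auto
    hence "a i = a (Suc N) * (d N * h)" using ad[of N] by (simp add: mult_ac)
    thus ?thesis using subringD(5)[OF S dS h(1)] by blast
  qed
qed

lemma ideal_eventually_div:
  assumes S: "sring S" and aS: "\<And>n. a n \<in> S" and ad: "\<And>n. a n = d n * a (Suc n)" and dS: "\<And>n. d n \<in> S"
    and y: "y \<in> ideal_gen S (range a)"
  shows "\<exists>N0. \<forall>N\<ge>N0. \<exists>h\<in>S. y = a N * h"
proof -
  define T where "T = {y. \<exists>N0. \<forall>N\<ge>N0. \<exists>h\<in>S. y = a N * h}"
  have "ideal_gen S (range a) \<subseteq> T"
  proof (rule ideal_gen_least)
    have "\<forall>N\<ge>0. \<exists>h\<in>S. 0 = a N * h"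
    proof (intro allI impI)
      fix N :: nat show "\<exists>h\<in>S. 0 = a N * h" using subringD(1)[OF S] by (intro bexI[of _ 0]) simp_all
    qed
    thus "0 \<in> T" unfolding T_def by blast
  next
    fix y1 y2 assume "y1 \<in> T" "y2 \<in> T"
    then obtain N1 N2 where N1: "\<forall>N\<ge>N1. \<exists>h\<in>S. y1 = a N * h" and N2: "\<forall>N\<ge>N2. \<exists>h\<in>S. y2 = a N * h"
      unfolding T_def by blast
    have "\<exists>h\<in>S. y1 + y2 = a N * h" if "N \<ge> max N1 N2" for N
    proof -
      from that have "N \<ge> N1" "N \<ge> N2" by auto
      then obtain h1 h2 where "h1 \<in> S" "y1 = a N * h1" "h2 \<in> S" "y2 = a N * h2"
        using N1 N2 by meson
      thus ?thesis using subringD(3)[OF S] by (intro bexI[of _ "h1 + h2"]) (simp_all add: algebra_simps)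
    qed
    thus "y1 + y2 \<in> T" unfolding T_def by blast
  next
    fix s g assume s: "s \<in> S" and "g \<in> range a"
    then obtain i where gi: "g = a i" by blast
    have "\<exists>h\<in>S. s * g = a N * h" if iN: "i \<le> N" for N
    proof -
      obtain h where "h \<in> S" "a i = a N * h" using chain_div[of S a d, OF S aS ad dS iN] by blast
      thus ?thesis using subringD(5)[OF S s] gi by (intro bexI[of _ "s * h"]) (simp_all add: mult_ac)
    qed
    thus "s * g \<in> T" unfolding T_def by blast
  qed
  thus ?thesis using y unfolding T_def by blast
qed

lemma finite_common_N:
  assumes "finite F" "\<And>j. j \<in> F \<Longrightarrow> \<exists>N0::nat. \<forall>N\<ge>N0. P j N"
  shows "\<exists>N. \<forall>j\<in>F. P j N"
proof -
  have "\<exists>N0. \<forall>N\<ge>N0. \<forall>j\<in>F. P j N" using assms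
  proof (induction F rule: finite_induct)
    case empty thus ?case by simp
  next
    case (insert x F)
    obtain N1 where N1: "\<forall>N\<ge>N1. \<forall>j\<in>F. P j N" using insert by blast
    obtain N2 where N2: "\<forall>N\<ge>N2. P x N" using insert.prems by blast
    have "\<forall>N\<ge>max N1 N2. \<forall>j\<in>insert x F. P j N" using N1 N2 by simp
    thus ?case by blast
  qed
  thus ?thesis by blast
qed

lemma pi_linear:
  assumes S: "sring S" and hom: "hom_FK S (free_mod S J) \<pi>"
  shows "finite F \<Longrightarrow> F \<subseteq> J \<Longrightarrow> u \<in> free_mod S J \<Longrightarrow> {i. u i \<noteq> 0} \<subseteq> F \<Longrightarrow>
     \<pi> u = (\<Sum>j\<in>F. u j * \<pi> (\<lambda>i. if i = j then 1 else 0))"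
proof (induction F arbitrary: u rule: finite_induct)
  have H: "\<And>u v s. u \<in> free_mod S J \<Longrightarrow> v \<in> free_mod S J \<Longrightarrow> s \<in> S \<Longrightarrow> \<pi> (\<lambda>i. s * u i + v i) = s * \<pi> u + \<pi> v"
    using hom unfolding hom_FK_def by blast
  case empty
  hence u0: "u = (\<lambda>_. 0)" by auto
  have zF: "(\<lambda>_. 0) \<in> free_mod S J" using subringD(1)[OF S] unfolding free_mod_def by auto
  have "\<pi> (\<lambda>i. 1 * (\<lambda>_. 0::'a) i + (\<lambda>_. 0) i) = 1 * \<pi> (\<lambda>_. 0) + \<pi> (\<lambda>_. 0)"
    by (rule H[OF zF zF subringD(2)[OF S]])
  hence "\<pi> (\<lambda>_. 0) = \<pi> (\<lambda>_. 0) + \<pi> (\<lambda>_. 0)" by simp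
  hence "\<pi> (\<lambda>_. 0) = 0" by (metis add_cancel_right_right)
  thus ?case using u0 by simp
next
  have H: "\<And>u v s. u \<in> free_mod S J \<Longrightarrow> v \<in> free_mod S J \<Longrightarrow> s \<in> S \<Longrightarrow> \<pi> (\<lambda>i. s * u i + v i) = s * \<pi> u + \<pi> v"
    using hom unfolding hom_FK_def by blast
  case (insert j F)
  define u' where "u' = u(j := 0)"
  define e where "e = (\<lambda>i. if i = j then (1::'a) else 0)"
  have u'F: "u' \<in> free_mod S J" using insert.prems(2) subringD(1)[OF S] unfolding free_mod_def u'_def
    by (auto intro: finite_subset[of _ "{i. u i \<noteq> 0}"])
  have eF: "e \<in> free_mod S J" using insert.prems(1) subringD(1,2)[OF S] unfolding free_mod_def e_def
    by (auto intro: finite_subset[of _ "{j}"])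
  have uj: "u j \<in> S" using insert.prems(2) unfolding free_mod_def by auto
  have ueq: "u = (\<lambda>i. u j * e i + u' i)" unfolding e_def u'_def by auto
  have "\<pi> u = u j * \<pi> e + \<pi> u'" by (subst ueq, rule H[OF eF u'F uj])
  also have "\<pi> u' = (\<Sum>i\<in>F. u' i * \<pi> (\<lambda>k. if k = i then 1 else 0))"
  proof (rule insert.IH)
    show "F \<subseteq> J" using insert.prems(1) by simp
    show "u' \<in> free_mod S J" by (rule u'F)
    show "{i. u' i \<noteq> 0} \<subseteq> F" using insert.prems(3) unfolding u'_def by auto
  qed
  also have "\<dots> = (\<Sum>i\<in>F. u i * \<pi> (\<lambda>k. if k = i then 1 else 0))"
    using insert.hyps unfolding u'_def by (intro sum.cong) auto
  finally show ?case using insert.hyps by (simp add: e_def)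
qed

lemma not_projective:
  fixes a e :: "nat \<Rightarrow> 'k::field"
  assumes S: "sring S" and aS: "\<And>n. a n \<in> S" and a0: "\<And>n. a n \<noteq> 0"
    and eS: "\<And>n. e n \<in> S" and ae: "\<And>n. a n = a (Suc n) * a (Suc n) * e n"
    and nu: "\<And>n. \<not> unit_in S (a n)"
  shows "\<not> projective_mod S (ideal_gen S (range a))"
proof
  define M where "M = ideal_gen S (range a)"
  define d where "d n = a (Suc n) * e n" for n
  have ad: "a n = d n * a (Suc n)" for n using ae[of n] unfolding d_def by (simp add: mult_ac)
  have dS: "d n \<in> S" for n unfolding d_def using subringD(5)[OF S aS eS] .
  have MS: "M \<subseteq> S" unfolding M_def using ideal_gen_subset[OF S] aS by blast
  have aM: "a n \<in> M" for n unfolding M_def by (rule ideal_gen_gen[OF S]) auto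
  assume "projective_mod S M"
  then obtain J :: "'k set" and \<sigma> \<pi> where
    hs: "hom_KF S M \<sigma>" and sF: "\<sigma> ` M \<subseteq> free_mod S J" and hp: "hom_FK S (free_mod S J) \<pi>"
    and pM: "\<pi> ` free_mod S J \<subseteq> M" and inv: "\<forall>y\<in>M. \<pi> (\<sigma> y) = y"
    unfolding projective_mod_def M_def by blast
  have zM: "0 \<in> M" unfolding M_def by (rule ideal_gen_0)
  have s0: "\<sigma> 0 = (\<lambda>_. 0)"
  proof -
    have E: "\<sigma> (1 * 0 + 0) = (\<lambda>j. 1 * \<sigma> 0 j + \<sigma> 0 j)" using hs zM subringD(2)[OF S] unfolding hom_KF_def by blast
    have "\<sigma> 0 j = 1 * \<sigma> 0 j + \<sigma> 0 j" for j using fun_cong[OF E, of j] by (simp only: mult_zero_right add_0_right)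
    thus ?thesis by (metis add_cancel_right_right mult_1)
  qed
  have smul: "\<sigma> (s * y) = (\<lambda>j. s * \<sigma> y j)" if "s \<in> S" "y \<in> M" for s y
  proof -
    have "\<sigma> (s * y + 0) = (\<lambda>j. s * \<sigma> y j + \<sigma> 0 j)" using hs zM that unfolding hom_KF_def by blast
    thus ?thesis using s0 by simp
  qed
  define y0 where "y0 = a 0"
  have y0M: "y0 \<in> M" unfolding y0_def by (rule aM)
  have y0S: "y0 \<in> S" using y0M MS by auto
  have y00: "y0 \<noteq> 0" unfolding y0_def by (rule a0)
  have sig: "y0 * \<sigma> y j = y * \<sigma> y0 j" if "y \<in> M" for y j
  proof -
    have yS: "y \<in> S" using that MS by blast
    have "(\<lambda>j. y0 * \<sigma> y j) = \<sigma> (y0 * y)" by (rule smul[OF y0S that, symmetric])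
    also have "\<dots> = \<sigma> (y * y0)" by (simp add: mult.commute)
    also have "\<dots> = (\<lambda>j. y * \<sigma> y0 j)" by (rule smul[OF yS y0M])
    finally show ?thesis by (rule fun_cong)
  qed
  define u0 where "u0 = \<sigma> y0"
  have u0F: "u0 \<in> free_mod S J" using sF y0M unfolding u0_def by auto
  define F where "F = {i. u0 i \<noteq> 0}"
  have F: "finite F" "F \<subseteq> J" using u0F unfolding free_mod_def F_def by auto
  define g where "g j = \<pi> (\<lambda>i. if i = j then 1 else 0)" for j
  have gM: "g j \<in> M" if "j \<in> J" for j
  proof -
    have "(\<lambda>i. if i = j then 1 else 0) \<in> free_mod S J" using that subringD(1,2)[OF S]
      unfolding free_mod_def by (auto intro: finite_subset[of _ "{j}"])
    thus ?thesis unfolding g_def using pM by auto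
  qed
  have "\<pi> u0 = (\<Sum>j\<in>F. u0 j * g j)"
    unfolding g_def by (rule pi_linear[OF S hp F(1) F(2) u0F]) (simp add: F_def)
  hence y0sum: "y0 = (\<Sum>j\<in>F. u0 j * g j)" using inv y0M unfolding u0_def by simp
  have "\<exists>N. \<forall>j\<in>F. \<exists>h\<in>S. g j = a N * h"
  proof (rule finite_common_N[of F "\<lambda>j N. \<exists>h\<in>S. g j = a N * h", OF F(1)])
    fix j assume "j \<in> F"
    hence "g j \<in> ideal_gen S (range a)" using gM F(2) unfolding M_def by blast
    from ideal_eventually_div[OF S aS ad dS this]
    show "\<exists>N0. \<forall>N\<ge>N0. \<exists>h\<in>S. g j = a N * h" .
  qed
  then obtain N where "\<forall>j\<in>F. \<exists>h\<in>S. g j = a N * h" by (rule exE)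
  hence "\<forall>j\<in>F. \<exists>hh. hh \<in> S \<and> g j = a N * hh" by (simp add: Bex_def)
  from bchoice[OF this] obtain h where h: "\<forall>j\<in>F. h j \<in> S \<and> g j = a N * h j" by (rule exE)
  define b where "b = a (Suc N)"
  define t where "t = (\<Sum>j\<in>F. \<sigma> b j * e N * h j)"
  have bM: "b \<in> M" unfolding b_def by (rule aM)
  have sbF: "\<sigma> b \<in> free_mod S J" using sF bM by auto
  have sbS: "\<sigma> b j \<in> S" for j using sbF unfolding free_mod_def by blast
  have tS: "t \<in> S" unfolding t_def
  proof (rule subring_sum[OF S])
    fix j assume "j \<in> F"
    hence "h j \<in> S" using h by blast
    thus "\<sigma> b j * e N * h j \<in> S" using subringD(5)[OF S subringD(5)[OF S sbS eS]] by blast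
  qed
  have "y0 * (b * t) = (\<Sum>j\<in>F. b * (y0 * \<sigma> b j) * e N * h j)"
    unfolding t_def by (simp add: sum_distrib_left mult_ac)
  also have "\<dots> = (\<Sum>j\<in>F. u0 j * ((b * b * e N) * h j))"
    using sig[OF bM] unfolding u0_def by (simp add: mult_ac)
  also have "\<dots> = (\<Sum>j\<in>F. u0 j * g j)"
    using h ae[of N] unfolding b_def by (intro sum.cong) auto
  also have "\<dots> = y0" using y0sum by simp
  finally have "b * t = 1" using y00 by simp
  hence "unit_in S b" unfolding unit_in_def using tS by blast
  thus False using nu unfolding b_def by blast
qed


lemma add_power_CHAR:
  fixes y z :: "'k::field"
  assumes p: "prime p" "CHAR('k) = p"
  shows "(y + z) ^ p = y ^ p + z ^ p"
proof -
  have "(y + z) ^ p = (\<Sum>k\<le>p. of_nat (p choose k) * y ^ k * z ^ (p - k))"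
    by (rule binomial_ring)
  also have "\<dots> = (\<Sum>k\<in>{0, p}. of_nat (p choose k) * y ^ k * z ^ (p - k))"
  proof (rule sum.mono_neutral_right)
    show "finite {..p}" by simp
    show "{0, p} \<subseteq> {..p}" by auto
    show "\<forall>i\<in>{..p} - {0, p}. of_nat (p choose i) * y ^ i * z ^ (p - i) = 0"
    proof
      fix i assume i: "i \<in> {..p} - {0, p}"
      have "p dvd (p choose i)" using i p(1) by (intro dvd_choose_prime) (auto simp: prime_gt_0_nat)
      hence "(of_nat (p choose i) :: 'k) = 0" using p(2) by (simp add: of_nat_eq_0_iff_char_dvd)
      thus "of_nat (p choose i) * y ^ i * z ^ (p - i) = 0" by simp
    qed
  qed
  also have "\<dots> = y ^ p + z ^ p" using p(1) prime_gt_0_nat[OF p(1)] by (simp add: add.commute)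
  finally show ?thesis .
qed

lemma frob_inj:
  fixes y z :: "'k::field"
  assumes p: "prime p" "CHAR('k) = p" and eq: "y ^ p = z ^ p"
  shows "y = z"
proof -
  have "(y + - z) ^ p = y ^ p + (- z) ^ p" by (rule add_power_CHAR[OF p])
  also have "(- z) ^ p = - (z ^ p)" by (rule minus_power_prime_CHAR) (use p in auto)
  finally have "(y - z) ^ p = 0" using eq by simp
  thus ?thesis by simp
qed

lemma frob_pow_inj:
  fixes y z :: "'k::field"
  assumes p: "prime p" "CHAR('k) = p"
  shows "y ^ (p ^ n) = z ^ (p ^ n) \<Longrightarrow> y = z"
proof (induction n arbitrary: y z)
  case 0 thus ?case by simp
next
  case (Suc n)
  have "(y ^ p) ^ (p ^ n) = (z ^ p) ^ (p ^ n)" using Suc.prems by (simp add: power_mult[symmetric] mult.commute)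
  hence "y ^ p = z ^ p" by (rule Suc.IH)
  thus ?case by (rule frob_inj[OF p])
qed

lemma nonunit_root:
  assumes S: "sring S" and nx: "\<not> unit_in S x" and k: "y ^ k = x"
  shows "\<not> unit_in S y"
proof
  assume "unit_in S y"
  then obtain b where b: "b \<in> S" "y * b = 1" unfolding unit_in_def by blast
  have "x * b ^ k = (y * b) ^ k" using k by (simp add: power_mult_distrib)
  hence "x * b ^ k = 1" using b by simp
  thus False using nx subring_power[OF S b(1)] unfolding unit_in_def by blast
qed

lemma main_abstract:
  fixes a e :: "nat \<Rightarrow> 'k::field"
  assumes S: "sring S" and aS: "\<And>n. a n \<in> S" and a0: "\<And>n. a n \<noteq> 0"
    and eS: "\<And>n. e n \<in> S" and ae: "\<And>n. a n = a (Suc n) * a (Suc n) * e n"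
    and nu: "\<And>n. \<not> unit_in S (a n)"
  shows "countable_free_res_le1 S (ideal_gen S (range a)) \<and> pd_eq_1 S (ideal_gen S (range a))"
proof -
  define d where "d n = a (Suc n) * e n" for n
  have ad: "a n = d n * a (Suc n)" for n using ae[of n] unfolding d_def by (simp add: mult_ac)
  have dS: "d n \<in> S" for n unfolding d_def using subringD(5)[OF S aS eS] .
  have R: "countable_free_res_le1 S (ideal_gen S (range a))" by (rule resolution[of S a d, OF S aS a0 dS ad])
  moreover have "\<not> projective_mod S (ideal_gen S (range a))" by (rule not_projective[of S a e, OF S aS a0 eS ae nu])
  ultimately show ?thesis unfolding pd_eq_1_def by blast
qed

lemma alg_closed_root:
  fixes b :: "'k::field"
  assumes ac: "alg_closed_field TYPE('k)" and p: "p \<ge> 1"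
  shows "\<exists>y. y ^ p = b"
proof -
  have eq: "monom (1::'k) p - [:b:] = monom 1 p + [:-b:]" by simp
  have "degree (monom (1::'k) p + [:-b:]) = p"
    using p by (subst degree_add_eq_left) (simp_all add: degree_monom_eq)
  hence "degree (monom (1::'k) p - [:b:]) = p" unfolding eq .
  hence "0 < degree (monom (1::'k) p - [:b:])" using p by simp
  hence "\<exists>z. poly (monom 1 p - [:b:]) z = 0" using ac unfolding alg_closed_field_def by blast
  thus ?thesis by (auto simp: poly_monom)
qed

lemma char0_part:
  fixes R :: "'k::field set" and x :: 'k
  assumes R: "sring R" and xS: "x \<in> plus_closure R" and x0: "x \<noteq> 0"
    and nux: "\<not> unit_in (plus_closure R) x" and cr: "compatible_roots x r"
  shows "countable_free_res_le1 (plus_closure R) (ideal_gen (plus_closure R) {r n |n. n \<ge> 1}) \<and>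
         pd_eq_1 (plus_closure R) (ideal_gen (plus_closure R) {r n |n. n \<ge> 1})"
proof -
  define S where "S = plus_closure R"
  have S: "sring S" unfolding S_def by (rule plus_closure_sring[OF R])
  have xint: "integral_over R x" using xS unfolding plus_closure_def by simp
  have cm: "\<And>n m. n \<ge> 1 \<Longrightarrow> m \<ge> 1 \<Longrightarrow> r (n * m) ^ m = r n" and r1: "r 1 = x"
    using cr unfolding compatible_roots_def by auto
  have rk: "r k ^ k = x" if "k \<ge> 1" for k using cm[of 1 k] that r1 by simp
  define a where "a n = r (fact (Suc n))" for n
  have fpos: "(fact (Suc n) :: nat) \<ge> 1" for n by (rule fact_ge_1)
  have ak: "a n ^ fact (Suc n) = x" for n unfolding a_def by (rule rk[OF fpos])
  have aS: "a n \<in> S" for n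
    unfolding S_def plus_closure_def using integral_root[OF R xint fpos ak] by simp
  have a0: "a n \<noteq> 0" for n
  proof
    assume "a n = 0"
    hence "x = 0" using ak[of n] fpos[of n] by (metis power_0_left not_one_le_zero)
    thus False using x0 by simp
  qed
  have ae: "a n = a (Suc n) * a (Suc n) * a (Suc n) ^ n" for n
  proof -
    have F: "(fact (Suc (Suc n)) :: nat) = fact (Suc n) * Suc (Suc n)"
      by (simp only: fact_Suc[of "Suc n"] of_nat_id mult.commute)
    have "a (Suc n) = r (fact (Suc n) * Suc (Suc n))" unfolding a_def by (simp only: F)
    hence E1: "a (Suc n) ^ Suc (Suc n) = a n" unfolding a_def using cm[OF fpos[of n], of "Suc (Suc n)"] by simp
    have E2: "a (Suc n) ^ Suc (Suc n) = a (Suc n) * a (Suc n) * a (Suc n) ^ n" by (simp add: mult_ac)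
    show ?thesis by (simp only: E1[symmetric] E2)
  qed
  have eS: "a (Suc n) ^ n \<in> S" for n by (rule subring_power[OF S aS])
  have nu: "\<not> unit_in S (a n)" for n using nonunit_root[OF S nux[folded S_def] ak] .
  have main: "countable_free_res_le1 S (ideal_gen S (range a)) \<and> pd_eq_1 S (ideal_gen S (range a))"
    by (rule main_abstract[of S a "\<lambda>n. a (Suc n) ^ n", OF S aS a0 eS ae nu])
  have "ideal_gen S {r n |n. n \<ge> 1} = ideal_gen S (range a)"
  proof
    show "ideal_gen S {r n |n. n \<ge> 1} \<subseteq> ideal_gen S (range a)"
    proof (rule ideal_gen_mono[OF S], rule subsetI)
      fix y assume "y \<in> {r n |n. n \<ge> 1}"
      then obtain n where n: "y = r n" "n \<ge> 1" by blast
      then obtain m where m: "n = Suc m" by (cases n) auto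
      have "n dvd fact n" using n(2) by (simp add: dvd_fact)
      then obtain q where q: "fact n = n * q" by (auto elim: dvdE)
      have q1: "q \<ge> 1" using q fact_ge_1[of n, where 'a = nat] by (cases q) auto
      have "a m ^ q = r n" unfolding a_def m[symmetric] q by (rule cm[OF n(2) q1])
      moreover have "a m ^ (q - 1) * a m = a m ^ q" using q1 by (cases q) (simp_all add: mult.commute)
      ultimately have y: "y = a m ^ (q - 1) * a m" using n(1) by simp
      have "a m ^ (q - 1) * a m \<in> ideal_gen S (range a)"
        by (rule ideal_gen_smult[OF S subring_power[OF S aS] ideal_gen_gen[OF S rangeI]])
      thus "y \<in> ideal_gen S (range a)" using y by simp
    qed
    show "ideal_gen S (range a) \<subseteq> ideal_gen S {r n |n. n \<ge> 1}"
    proof (rule ideal_gen_mono[OF S], rule subsetI)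
      fix y assume "y \<in> range a"
      then obtain m where "y = a m" by blast
      hence "y \<in> {r n |n. n \<ge> 1}" unfolding a_def using fpos[of m] by blast
      thus "y \<in> ideal_gen S {r n |n. n \<ge> 1}" by (rule ideal_gen_gen[OF S])
    qed
  qed
  thus ?thesis using main unfolding S_def by simp
qed

lemma charp_part:
  fixes R :: "'k::field set" and x :: 'k
  assumes R: "sring R" and ac: "alg_closed_field TYPE('k)" and xS: "x \<in> plus_closure R" and x0: "x \<noteq> 0"
    and nux: "\<not> unit_in (plus_closure R) x" and p: "prime p" "CHAR('k) = p"
  shows "countable_free_res_le1 (plus_closure R) (ideal_gen (plus_closure R) {y. \<exists>n. y ^ (p ^ n) = x}) \<and>
         pd_eq_1 (plus_closure R) (ideal_gen (plus_closure R) {y. \<exists>n. y ^ (p ^ n) = x})"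
proof -
  define S where "S = plus_closure R"
  have S: "sring S" unfolding S_def by (rule plus_closure_sring[OF R])
  have xint: "integral_over R x" using xS unfolding plus_closure_def by simp
  have p2: "p \<ge> 2" using p(1) by (rule prime_ge_2_nat)
  define a where "a = rec_nat x (\<lambda>n y. SOME z. z ^ p = y)"
  have a_0: "a 0 = x" unfolding a_def by simp
  have a_S: "a (Suc n) ^ p = a n" for n
  proof -
    have "\<exists>z. z ^ p = a n" by (rule alg_closed_root[OF ac]) (use p2 in simp)
    hence "(SOME z. z ^ p = a n) ^ p = a n" by (rule someI_ex)
    thus ?thesis unfolding a_def by simp
  qed
  have ak: "a n ^ (p ^ n) = x" for n
  proof (induction n)
    case 0 thus ?case using a_0 by simp
  next
    case (Suc n)
    have "a (Suc n) ^ (p ^ Suc n) = (a (Suc n) ^ p) ^ (p ^ n)" by (simp add: power_mult)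
    thus ?case using a_S Suc by simp
  qed
  have ppos: "p ^ n \<ge> 1" for n using p2 by simp
  have aS: "a n \<in> S" for n
    unfolding S_def plus_closure_def using integral_root[OF R xint ppos ak] by simp
  have a0: "a n \<noteq> 0" for n
  proof
    assume "a n = 0"
    hence "x = 0" using ak[of n] ppos[of n] by (metis power_0_left not_one_le_zero)
    thus False using x0 by simp
  qed
  have ae: "a n = a (Suc n) * a (Suc n) * a (Suc n) ^ (p - 2)" for n
  proof -
    define k where "k = p - 2"
    have pk: "p = Suc (Suc k)" using p2 unfolding k_def by simp
    have "a (Suc n) ^ p = a (Suc n) * a (Suc n) * a (Suc n) ^ (p - 2)"
      unfolding k_def[symmetric] pk by (simp add: mult_ac)
    thus ?thesis using a_S[of n] by simp
  qed
  have eS: "a (Suc n) ^ (p - 2) \<in> S" for n by (rule subring_power[OF S aS])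
  have nu: "\<not> unit_in S (a n)" for n using nonunit_root[OF S nux[folded S_def] ak] .
  have main: "countable_free_res_le1 S (ideal_gen S (range a)) \<and> pd_eq_1 S (ideal_gen S (range a))"
    by (rule main_abstract[of S a "\<lambda>n. a (Suc n) ^ (p - 2)", OF S aS a0 eS ae nu])
  have "{y. \<exists>n. y ^ (p ^ n) = x} = range a"
  proof
    show "{y. \<exists>n. y ^ (p ^ n) = x} \<subseteq> range a"
    proof
      fix y assume "y \<in> {y. \<exists>n. y ^ (p ^ n) = x}"
      then obtain n where "y ^ (p ^ n) = x" by blast
      hence "y ^ (p ^ n) = a n ^ (p ^ n)" using ak by simp
      hence "y = a n" by (rule frob_pow_inj[OF p])
      thus "y \<in> range a" by simp
    qed
    show "range a \<subseteq> {y. \<exists>n. y ^ (p ^ n) = x}" using ak by blast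
  qed
  thus ?thesis using main unfolding S_def by simp
qed

theorem lemma4p2:
  fixes R :: "'k::field set" and x :: 'k
  assumes "is_alg_closure_of R"
    and "x \<in> plus_closure R" and "x \<noteq> 0" and "\<not> unit_in (plus_closure R) x"
  shows "(CHAR('k) = 0 \<longrightarrow>
           (\<forall>r. compatible_roots x r \<longrightarrow>
              countable_free_res_le1 (plus_closure R) (ideal_gen (plus_closure R) {r n |n. n \<ge> 1}) \<and>
              (noetherian_ring R \<and> local_ring R \<and> henselian R \<longrightarrow>
                 pd_eq_1 (plus_closure R) (ideal_gen (plus_closure R) {r n |n. n \<ge> 1}))))
       \<and> (\<forall>p. prime p \<and> CHAR('k) = p \<longrightarrow>
              countable_free_res_le1 (plus_closure R) (ideal_gen (plus_closure R) {y. \<exists>n. y ^ (p ^ n) = x}) \<and>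
              (noetherian_ring R \<and> local_ring R \<and> henselian R \<longrightarrow>
                 pd_eq_1 (plus_closure R) (ideal_gen (plus_closure R) {y. \<exists>n. y ^ (p ^ n) = x})))"
proof -
  have R: "sring R" and ac: "alg_closed_field TYPE('k)"
    using assms(1) unfolding is_alg_closure_of_def subring_of_sring by auto
  show ?thesis
  proof (intro conjI allI impI)
    fix r assume "compatible_roots x r"
    note C = char0_part[OF R assms(2,3,4) this]
    show "countable_free_res_le1 (plus_closure R) (ideal_gen (plus_closure R) {r n |n. n \<ge> 1})"
      using C by blast
    show "pd_eq_1 (plus_closure R) (ideal_gen (plus_closure R) {r n |n. n \<ge> 1})" using C by blast
  next
    fix p :: nat assume "prime p \<and> CHAR('k) = p"
    hence p: "prime p" "CHAR('k) = p" by auto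
    note C = charp_part[OF R ac assms(2,3,4) p]
    show "countable_free_res_le1 (plus_closure R) (ideal_gen (plus_closure R) {y. \<exists>n. y ^ (p ^ n) = x})"
      using C by blast
    show "pd_eq_1 (plus_closure R) (ideal_gen (plus_closure R) {y. \<exists>n. y ^ (p ^ n) = x})" using C by blast
  qed
qed

end
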